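(* Let $\Bbbk$ be an algebraically closed field of characteristic zero and $H$ the $\Bbbk$-algebra generated by $b,c,z$ with relations $b^2=c^2=1$, $bc=cb$, $zb=-bz$, $zc=-cz$, $z^2=0$. Let $e_0=\frac14(1+b)(1+c)$, $e_1=\frac14(1+b)(1-c)$, $e_2=\frac14(1-b)(1+c)$, $e_3=\frac14(1-b)(1-c)$, and let $\tau$ be the permutation of $\{0,1,2,3\}$ with $\tau(0)=3,\tau(1)=2,\tau(2)=1,\tau(3)=0$. Then for $0\leq i\leq3$ and any $k\in\{0,1,2,3\}\setminus\{i,\tau(i)\}$, the annihilator ideal of the $H$-module $M(2,i)$ is $(ze_{\tau(i)}+e_k+e_{\tau(k)})$.
   Context: $V_i=\Bbbk v_i$ ($0\leq i\leq3$) are the one-dimensional modules of the group algebra of $\langle b,c\rangle\cong$ Klein four-group with $b\cdot v_0=v_0,c\cdot v_0=v_0$; $b\cdot v_1=v_1,c\cdot v_1=-v_1$; $b\cdot v_2=-v_2,c\cdot v_2=v_2$; $b\cdot v_3=-v_3,c\cdot v_3=-v_3$. $M(2,i)$ is the $2$-dimensional $H$-module with basis $v_i, xv_i$ where $b\cdot(xv_i)=-x(b\cdot v_i)$, $c\cdot(xv_i)=-x(c\cdot v_i)$, $z\cdot v_i=xv_i$, $z\cdot(xv_i)=0$. $(a)$ denotes the two-sided ideal of $H$ generated by $a$. *)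

theory Defs
  imports "HOL-Computational_Algebra.Polynomial"
begin

text \<open>The algebra H = k<b,c,z>/(b^2=c^2=1, bc=cb, zb=-bz, zc=-cz, z^2=0) is realised
on its standard basis b^i c^j z^l (i,j,l in {0,1}): an element is its coefficient
function  h i j l  = coefficient of  b^i c^j z^l  (True = exponent 1).\<close>

type_synonym 'k H = "bool \<Rightarrow> bool \<Rightarrow> bool \<Rightarrow> 'k"

definition hadd :: "'k::field H \<Rightarrow> 'k H \<Rightarrow> 'k H" where
  "hadd f g = (\<lambda>i j l. f i j l + g i j l)"

definition hscale :: "'k::field \<Rightarrow> 'k H \<Rightarrow> 'k H" where
  "hscale a f = (\<lambda>i j l. a * f i j l)"

text \<open>Product of basis elements:
 (b^i1 c^j1 z^l1)(b^i2 c^j2 z^l2) = (-1)^(l1*(i2+j2)) b^(i1+i2) c^(j1+j2) z^(l1+l2),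
 which is 0 if l1 = l2 = 1.\<close>
definition hsign :: "bool \<Rightarrow> bool \<Rightarrow> bool \<Rightarrow> 'k::field" where
  "hsign l1 i2 j2 = (if l1 \<and> i2 \<noteq> j2 then -1 else 1)"

definition hmul :: "'k::field H \<Rightarrow> 'k H \<Rightarrow> 'k H" where
  "hmul f g = (\<lambda>i j l. \<Sum>i1\<in>UNIV. \<Sum>j1\<in>UNIV. \<Sum>l1\<in>UNIV. \<Sum>l2\<in>UNIV.
      if l1 \<and> l2 \<or> (l1 \<or> l2) \<noteq> l then 0
      else hsign l1 (i1 \<noteq> i) (j1 \<noteq> j) * f i1 j1 l1 * g (i1 \<noteq> i) (j1 \<noteq> j) l2)"

definition hbasis :: "bool \<Rightarrow> bool \<Rightarrow> bool \<Rightarrow> 'k::field H" where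
  "hbasis i j l = (\<lambda>i' j' l'. if i' = i \<and> j' = j \<and> l' = l then 1 else 0)"

definition hone :: "'k::field H" where "hone = hbasis False False False"
definition hb :: "'k::field H" where "hb = hbasis True False False"
definition hc :: "'k::field H" where "hc = hbasis False True False"
definition hz :: "'k::field H" where "hz = hbasis False False True"

definition he :: "nat \<Rightarrow> 'k::field H" where
  "he n = hscale (1/4)
     (hmul (hadd hone (hscale (if n = 0 \<or> n = 1 then 1 else -1) hb))
           (hadd hone (hscale (if n = 0 \<or> n = 2 then 1 else -1) hc)))"

definition tau :: "nat \<Rightarrow> nat" where "tau n = 3 - n"

definition ideal_gen :: "'k::field H \<Rightarrow> 'k H set" where
  "ideal_gen a = {h. \<exists>(N::nat) x y. h = (\<lambda>i j l. \<Sum>n<N. hmul (hmul (x n) a) (y n) i j l)}"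

text \<open>Module M(2,n): elements (\<alpha>,\<beta>) stand for \<alpha> v_n + \<beta> x v_n.
 Signs of b and c on v_n.\<close>
definition sb :: "nat \<Rightarrow> 'k::field" where "sb n = (if n = 0 \<or> n = 1 then 1 else -1)"
definition sc :: "nat \<Rightarrow> 'k::field" where "sc n = (if n = 0 \<or> n = 2 then 1 else -1)"

definition actB :: "nat \<Rightarrow> 'k::field \<times> 'k \<Rightarrow> 'k \<times> 'k" where
  "actB n m = (sb n * fst m, - sb n * snd m)"
definition actC :: "nat \<Rightarrow> 'k::field \<times> 'k \<Rightarrow> 'k \<times> 'k" where
  "actC n m = (sc n * fst m, - sc n * snd m)"
definition actZ :: "'k::field \<times> 'k \<Rightarrow> 'k \<times> 'k" where
  "actZ m = (0, fst m)"

definition act_basis :: "nat \<Rightarrow> bool \<Rightarrow> bool \<Rightarrow> bool \<Rightarrow> 'k::field \<times> 'k \<Rightarrow> 'k \<times> 'k" where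
  "act_basis n i j l m =
     (if i then actB n else id) ((if j then actC n else id) ((if l then actZ else id) m))"

definition act :: "nat \<Rightarrow> 'k::field H \<Rightarrow> 'k \<times> 'k \<Rightarrow> 'k \<times> 'k" where
  "act n h m =
    ((\<Sum>i\<in>UNIV. \<Sum>j\<in>UNIV. \<Sum>l\<in>UNIV. h i j l * fst (act_basis n i j l m)),
     (\<Sum>i\<in>UNIV. \<Sum>j\<in>UNIV. \<Sum>l\<in>UNIV. h i j l * snd (act_basis n i j l m)))"

definition annihilator :: "nat \<Rightarrow> 'k::field H set" where
  "annihilator n = {h. \<forall>m. act n h m = (0, 0)}"

definition alg_closed :: "'k::field itself \<Rightarrow> bool" where
  "alg_closed _ = (\<forall>p :: 'k poly. degree p \<ge> 1 \<longrightarrow> (\<exists>x. poly p x = 0))"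

end

theory Submission
  imports Defs
begin

definition rA :: "nat \<Rightarrow> 'k::field H \<Rightarrow> 'k" where
  "rA n h = (\<Sum>i\<in>UNIV. \<Sum>j\<in>UNIV. h i j False * (if i then sb n else 1) * (if j then sc n else 1))"
definition rB :: "nat \<Rightarrow> 'k::field H \<Rightarrow> 'k" where
  "rB n h = (\<Sum>i\<in>UNIV. \<Sum>j\<in>UNIV. h i j False * (if i then - sb n else 1) * (if j then - sc n else 1))"
definition rD :: "nat \<Rightarrow> 'k::field H \<Rightarrow> 'k" where
  "rD n h = (\<Sum>i\<in>UNIV. \<Sum>j\<in>UNIV. h i j True * (if i then - sb n else 1) * (if j then - sc n else 1))"

lemma act_eq: "act n h m = (rA n h * fst m, rB n h * snd m + rD n h * fst m)"
  unfolding act_def act_basis_def rA_def rB_def rD_def actB_def actC_def actZ_def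
  by (simp add: UNIV_bool algebra_simps)

lemma ann_iff: "h \<in> annihilator n \<longleftrightarrow> rA n h = 0 \<and> rB n h = 0 \<and> rD n h = 0"
  unfolding annihilator_def
  apply (simp add: act_eq)
  apply (rule iffI)
   apply (metis fst_conv snd_conv mult_1_right mult_zero_right add_0 add_0_right)
  by simp

lemma sb_sq: "sb n * sb n = (1::'k::field)" by (simp add: sb_def)
lemma sc_sq: "sc n * sc n = (1::'k::field)" by (simp add: sc_def)

lemma rA_mul: "rA n (hmul f g) = rA n f * rA n g"
  unfolding rA_def hmul_def hsign_def sb_def sc_def
  by (simp add: UNIV_bool algebra_simps)
lemma rB_mul: "rB n (hmul f g) = rB n f * rB n g"
  unfolding rB_def hmul_def hsign_def sb_def sc_def
  by (simp add: UNIV_bool algebra_simps)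
lemma rD_mul: "rD n (hmul f g) = rD n f * rA n g + rB n f * rD n g"
  unfolding rA_def rB_def rD_def hmul_def hsign_def sb_def sc_def
  by (simp add: UNIV_bool algebra_simps)

lemma rA_sum: "rA n (\<lambda>i j l. \<Sum>q<(N::nat). F q i j l) = (\<Sum>q<N. rA n (F q))"
  by (induction N) (simp_all add: rA_def UNIV_bool algebra_simps)
lemma rB_sum: "rB n (\<lambda>i j l. \<Sum>q<(N::nat). F q i j l) = (\<Sum>q<N. rB n (F q))"
  by (induction N) (simp_all add: rB_def UNIV_bool algebra_simps)
lemma rD_sum: "rD n (\<lambda>i j l. \<Sum>q<(N::nat). F q i j l) = (\<Sum>q<N. rD n (F q))"
  by (induction N) (simp_all add: rD_def UNIV_bool algebra_simps)

lemma rA_add: "rA n (hadd f g) = rA n f + rA n g"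
  by (simp add: rA_def hadd_def UNIV_bool algebra_simps)
lemma rB_add: "rB n (hadd f g) = rB n f + rB n g"
  by (simp add: rB_def hadd_def UNIV_bool algebra_simps)
lemma rD_add: "rD n (hadd f g) = rD n f + rD n g"
  by (simp add: rD_def hadd_def UNIV_bool algebra_simps)
lemma rA_scale: "rA n (hscale a f) = a * rA n f"
  by (simp add: rA_def hscale_def UNIV_bool algebra_simps)
lemma rB_scale: "rB n (hscale a f) = a * rB n f"
  by (simp add: rB_def hscale_def UNIV_bool algebra_simps)
lemma rD_scale: "rD n (hscale a f) = a * rD n f"
  by (simp add: rD_def hscale_def UNIV_bool algebra_simps)

lemma rA_hone[simp]: "rA n hone = 1" by (simp add: rA_def hone_def hbasis_def UNIV_bool)
lemma rB_hone[simp]: "rB n hone = 1" by (simp add: rB_def hone_def hbasis_def UNIV_bool)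
lemma rD_hone[simp]: "rD n hone = 0" by (simp add: rD_def hone_def hbasis_def UNIV_bool)
lemma rA_hz[simp]: "rA n hz = 0" by (simp add: rA_def hz_def hbasis_def UNIV_bool)
lemma rB_hz[simp]: "rB n hz = 0" by (simp add: rB_def hz_def hbasis_def UNIV_bool)
lemma rD_hz[simp]: "rD n hz = 1" by (simp add: rD_def hz_def hbasis_def UNIV_bool)
lemma rA_hb: "rA n hb = sb n" by (simp add: rA_def hb_def hbasis_def UNIV_bool)
lemma rB_hb: "rB n hb = - sb n" by (simp add: rB_def hb_def hbasis_def UNIV_bool)
lemma rD_hb: "rD n hb = 0" by (simp add: rD_def hb_def hbasis_def UNIV_bool)
lemma rA_hc: "rA n hc = sc n" by (simp add: rA_def hc_def hbasis_def UNIV_bool)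
lemma rB_hc: "rB n hc = - sc n" by (simp add: rB_def hc_def hbasis_def UNIV_bool)
lemma rD_hc: "rD n hc = 0" by (simp add: rD_def hc_def hbasis_def UNIV_bool)

lemmas rsimps = rA_add rB_add rD_add rA_scale rB_scale rD_scale rA_mul rB_mul rD_mul
  rA_hb rB_hb rD_hb rA_hc rB_hc rD_hc rA_sum rB_sum rD_sum

lemma r_inj:
  fixes h h' :: "'k::field_char_0 H"
  assumes "\<And>m. m \<le> 3 \<Longrightarrow> rA m h = rA m h' \<and> rD m h = rD m h'"
  shows "h = h'"
proof -
  have a: "rA m h = rA m h'" "rD m h = rD m h'" if "m \<le> 3" for m using assms[OF that] by auto
  note e = a[of 0] a[of 1] a[of 2] a[of 3]
  show ?thesis
  proof (intro ext)
    fix x y w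
    show "h x y w = h' x y w"
      using e by (cases x; cases y; cases w; simp add: rA_def rD_def sb_def sc_def UNIV_bool; algebra)
  qed
qed

lemma rB_tau: "n \<le> 3 \<Longrightarrow> rB n h = rA (3 - n) h"
  by (simp add: rA_def rB_def sb_def sc_def UNIV_bool; auto)

lemma he_alt: "he n = hscale (1/4) (hmul (hadd hone (hscale (sb n) hb)) (hadd hone (hscale (sc n) hc)))"
  by (simp add: he_def sb_def sc_def)
lemma rA_he: "rA m (he n) = 1/4 * ((1 + sb n * sb m) * (1 + sc n * sc m))"
  by (simp add: he_alt rsimps algebra_simps)
lemma rB_he: "rB m (he n) = 1/4 * ((1 - sb n * sb m) * (1 - sc n * sc m))"
  by (simp add: he_alt rsimps algebra_simps)
lemma rD_he: "rD m (he n) = 0"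
  by (simp add: he_def rsimps)

lemma cases8: "i \<le> 3 \<Longrightarrow> k \<le> 3 \<Longrightarrow> k \<noteq> i \<Longrightarrow> k \<noteq> tau i \<Longrightarrow>
  P 0 1 \<Longrightarrow> P 0 2 \<Longrightarrow> P 1 0 \<Longrightarrow> P 1 3 \<Longrightarrow> P 2 0 \<Longrightarrow> P 2 3 \<Longrightarrow> P 3 1 \<Longrightarrow> P 3 2 \<Longrightarrow> P i k"
  unfolding tau_def
  by (cases i; cases k; auto simp: eval_nat_numeral less_Suc_eq_le[symmetric] less_Suc_eq)

lemma gen_zero:
  assumes "i \<le> 3" "k \<le> 3" "k \<noteq> i" "k \<noteq> tau i"
  shows "rA i (hadd (hmul hz (he (tau i))) (hadd (he k) (he (tau k)))) = (0::'k::field_char_0) \<and>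
         rB i (hadd (hmul hz (he (tau i))) (hadd (he k) (he (tau k)))) = (0::'k) \<and>
         rD i (hadd (hmul hz (he (tau i))) (hadd (he k) (he (tau k)))) = (0::'k)"
  using assms
  by (rule cases8; simp add: rsimps rA_he rB_he rD_he sb_def sc_def tau_def)

lemma sub1:
  fixes g :: "'k::field_char_0 H"
  assumes "rA i g = 0" "rB i g = 0" "rD i g = 0"
  shows "ideal_gen g \<subseteq> annihilator i"
proof
  fix h assume "h \<in> ideal_gen g"
  then obtain N x y where h: "h = (\<lambda>i j l. \<Sum>n<(N::nat). hmul (hmul (x n) g) (y n) i j l)"
    unfolding ideal_gen_def by blast
  show "h \<in> annihilator i" unfolding ann_iff h using assms by (simp add: rsimps)
qed


definition gG :: "nat \<Rightarrow> nat \<Rightarrow> 'k::field H" where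
  "gG i k = hadd (hmul hz (he (tau i))) (hadd (he k) (he (tau k)))"
definition rhs :: "nat \<Rightarrow> nat \<Rightarrow> 'k::field H \<Rightarrow> 'k H" where
  "rhs i k h = hadd (hmul (hmul (hmul h (hadd (he k) (he (tau k)))) (gG i k)) hone)
                    (hmul (hmul (hscale (rD (tau i) h) hone) (gG i k)) (he (tau i)))"

lemma key:
  assumes "i \<le> 3" "k \<le> 3" "k \<noteq> i" "k \<noteq> tau i"
  shows "\<forall>m h. m \<le> 3 \<longrightarrow> rA i h = 0 \<longrightarrow> rA (3 - i) h = 0 \<longrightarrow> rD i h = 0 \<longrightarrow>
     (rA m h = rA m (rhs i k h) \<and> rD m h = rD m (rhs i k (h :: 'k::field_char_0 H)))"
  using assms
proof (rule cases8)
qed (auto simp: rhs_def gG_def rsimps rA_he rB_he rD_he sb_def sc_def tau_def rB_tau eval_nat_numeral le_Suc_eq)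

lemma sup1:
  fixes h :: "'k::field_char_0 H"
  assumes "i \<le> 3" "k \<le> 3" "k \<noteq> i" "k \<noteq> tau i"
   and "h \<in> annihilator i"
  shows "h \<in> ideal_gen (gG i k)"
proof -
  have z: "rA i h = 0" "rB i h = 0" "rD i h = 0" using assms(5) ann_iff by auto
  have z2: "rA (3 - i) h = 0" using z(2) rB_tau assms(1) by metis
  define x :: "nat \<Rightarrow> 'k H" where "x = (\<lambda>n::nat. if n = 0 then hmul h (hadd (he k) (he (tau k))) else hscale (rD (tau i) h) hone)"
  define y :: "nat \<Rightarrow> 'k H" where "y = (\<lambda>n::nat. if n = 0 then hone else he (tau i))"
  have "h = rhs i k h"
    by (rule r_inj) (use key[OF assms(1-4)] z z2 in blast)
  also have "\<dots> = (\<lambda>a b c. \<Sum>n<(2::nat). hmul (hmul (x n) (gG i k)) (y n) a b c)"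
    by (simp add: rhs_def hadd_def eval_nat_numeral x_def y_def)
  finally show ?thesis unfolding ideal_gen_def by blast
qed

theorem corollary5p2:
  fixes i k :: nat
  assumes "alg_closed TYPE('k::field_char_0)"
    and "i \<le> 3" and "k \<le> 3" and "k \<noteq> i" and "k \<noteq> tau i"
  shows "(annihilator i :: 'k H set) =
         ideal_gen (hadd (hmul hz (he (tau i))) (hadd (he k) (he (tau k))))"
proof
  show "(annihilator i :: 'k H set) \<subseteq> ideal_gen (hadd (hmul hz (he (tau i))) (hadd (he k) (he (tau k))))"
    using sup1[OF assms(2-5)] unfolding gG_def by blast
  show "ideal_gen (hadd (hmul hz (he (tau i))) (hadd (he k) (he (tau k)))) \<subseteq> (annihilator i :: 'k H set)"
    using gen_zero[OF assms(2-5)] by (intro sub1) auto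
qed
end
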